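(* Let $n\ge2$ and $0<p<n$. Writing $x=(x',x_n)$ with $x'\in\mathbb R^{n-1}$, let $$\Omega=\{(x',x_n): |x'|<1,\ 0<x_n<1-|x'|^2\},\qquad w(x)=x_n-x_n^{\frac{2}{n+p}}(1-|x'|^2)^{\frac{n+p-2}{n+p}}.$$ Then: (i) $w$ is smooth and convex in $\Omega$, extends continuously to $\overline\Omega$, and $w=0$ on $\partial\Omega$; (ii) $\det D^2w\in L^1(\Omega)$; (iii) $w\notin C^{\alpha}(\overline{\Omega})$ for any $\alpha>\frac{2}{n+p}$. *)

theory Defs
  imports "HOL-Analysis.Analysis"
begin

definition partial_deriv :: "'n::finite \<Rightarrow> (real^'n \<Rightarrow> real) \<Rightarrow> real^'n \<Rightarrow> real" where
  "partial_deriv i f x = deriv (\<lambda>t. f (x + t *\<^sub>R axis i 1)) 0"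

fun iter_partial :: "'n::finite list \<Rightarrow> (real^'n \<Rightarrow> real) \<Rightarrow> real^'n \<Rightarrow> real" where
  "iter_partial [] f = f"
| "iter_partial (i # is) f = partial_deriv i (iter_partial is f)"

definition smooth_on :: "(real^'n::finite) set \<Rightarrow> (real^'n \<Rightarrow> real) \<Rightarrow> bool" where
  "smooth_on S f \<longleftrightarrow> open S \<and>
     (\<forall>is. continuous_on S (iter_partial is f) \<and>
        (\<forall>i. \<forall>x\<in>S. (\<lambda>t. iter_partial is f (x + t *\<^sub>R axis i 1)) differentiable (at 0)))"

definition hessian :: "(real^'n::finite \<Rightarrow> real) \<Rightarrow> real^'n \<Rightarrow> real^'n^'n" where
  "hessian f x = (\<chi> i j. partial_deriv i (partial_deriv j f) x)"

definition holder_on :: "real \<Rightarrow> (real^'n::finite) set \<Rightarrow> (real^'n \<Rightarrow> real) \<Rightarrow> bool" where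
  "holder_on \<alpha> S f \<longleftrightarrow> bounded (f ` S) \<and>
     (\<exists>C. \<forall>x\<in>S. \<forall>y\<in>S. \<bar>f x - f y\<bar> \<le> C * norm (x - y) powr \<alpha>)"

text \<open>Coordinates x = (x', x_n): the index k plays the role of the last coordinate x_n;
  |x'|^2 is the sum of squares of the remaining coordinates.\<close>
definition xprime_sq :: "'n::finite \<Rightarrow> real^'n \<Rightarrow> real" where
  "xprime_sq k x = (\<Sum>i\<in>UNIV - {k}. (x $ i)^2)"

definition Omega :: "'n::finite \<Rightarrow> (real^'n) set" where
  "Omega k = {x. xprime_sq k x < 1 \<and> 0 < x $ k \<and> x $ k < 1 - xprime_sq k x}"

definition wfun :: "'n::finite \<Rightarrow> real \<Rightarrow> real^'n \<Rightarrow> real" where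
  "wfun k p x = x $ k - (x $ k) powr (2 / (real CARD('n) + p))
       * (1 - xprime_sq k x) powr ((real CARD('n) + p - 2) / (real CARD('n) + p))"

end

theory Submission
  imports Defs
begin

datatype 'n ex = Cst real | Crd 'n | Pw real real | Ad "'n ex" "'n ex" | Mu "'n ex" "'n ex"

fun ev :: "'n::finite \<Rightarrow> 'n ex \<Rightarrow> real^'n \<Rightarrow> real" where
  "ev k (Cst c) x = c"
| "ev k (Crd i) x = x $ i"
| "ev k (Pw c d) x = (x $ k) powr c * (1 - xprime_sq k x) powr d"
| "ev k (Ad e f) x = ev k e x + ev k f x"
| "ev k (Mu e f) x = ev k e x * ev k f x"

fun dr :: "'n::finite \<Rightarrow> 'n \<Rightarrow> 'n ex \<Rightarrow> 'n ex" where
  "dr k i (Cst c) = Cst 0"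
| "dr k i (Crd j) = Cst (if i = j then 1 else 0)"
| "dr k i (Pw c d) = (if i = k then Mu (Cst c) (Pw (c-1) d)
      else Mu (Cst (-2*d)) (Mu (Crd i) (Pw c (d-1))))"
| "dr k i (Ad e f) = Ad (dr k i e) (dr k i f)"
| "dr k i (Mu e f) = Ad (Mu (dr k i e) f) (Mu e (dr k i f))"

lemma xps_shift_k:
  "xprime_sq k (x + t *\<^sub>R axis k 1) = xprime_sq k x"
  unfolding xprime_sq_def by (intro sum.cong) (auto simp: axis_def)

lemma xps_shift:
  assumes "i \<noteq> k"
  shows "xprime_sq k (x + t *\<^sub>R axis i 1) = xprime_sq k x + (2*t*x$i + t^2)"
proof -
  have "xprime_sq k (x + t *\<^sub>R axis i 1) = (\<Sum>j\<in>UNIV-{k}. (x$j)^2 + (if j = i then 2*t*x$i + t^2 else 0))"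
    unfolding xprime_sq_def by (intro sum.cong) (auto simp: axis_def power2_eq_square algebra_simps)
  also have "\<dots> = xprime_sq k x + (2*t*x$i + t^2)"
    using assms by (simp add: sum.distrib xprime_sq_def)
  finally show ?thesis .
qed

lemma shift_nth[simp]: "(x + t *\<^sub>R axis i 1) $ j = x $ j + (if j = i then t else 0)"
  by (simp add: axis_def)

lemma Omega_pos: "x \<in> Omega k \<Longrightarrow> 0 < x $ k \<and> 0 < 1 - xprime_sq k x"
  unfolding Omega_def by auto

lemma ev_deriv:
  assumes x: "x \<in> Omega k"
  shows "((\<lambda>t. ev k e (x + t *\<^sub>R axis i 1)) has_real_derivative ev k (dr k i e) x) (at 0)"
proof (induction e)
  case (Cst c) then show ?case by simp
next
  case (Crd j) then show ?case
    by (auto simp: axis_def intro!: derivative_eq_intros)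
next
  case (Pw c d)
  from Omega_pos[OF x] have p1: "0 < x $ k" and p2: "0 < 1 - xprime_sq k x" by auto
  show ?case
  proof (cases "i = k")
    case True
    have "((\<lambda>t. (x $ k + t) powr c * (1 - xprime_sq k x) powr d) has_real_derivative
        c * (x$k) powr (c-1) * (1 - xprime_sq k x) powr d) (at 0)"
      using p1 by (auto intro!: derivative_eq_intros)
    then show ?thesis using True by (simp add: xps_shift_k mult.assoc)
  next
    case False
    have "((\<lambda>t. (x $ k) powr c * (1 - (xprime_sq k x + (2*t*x$i + t^2))) powr d) has_real_derivative
        (-2*d) * (x$i * ((x$k) powr c * (1 - xprime_sq k x) powr (d-1)))) (at 0)"
      using p2 by (auto intro!: derivative_eq_intros)
    moreover have "\<And>t. (x + t *\<^sub>R axis i 1) $ k = x $ k" using False by (simp add: axis_def)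
    ultimately show ?thesis using False by (simp add: xps_shift del: vector_add_component vector_scaleR_component)
  qed
next
  case (Ad e f) then show ?case by (auto intro!: derivative_eq_intros)
next
  case (Mu e f) then show ?case by (auto intro!: derivative_eq_intros)
qed


fun ders :: "'n::finite \<Rightarrow> 'n list \<Rightarrow> 'n ex \<Rightarrow> 'n ex" where
  "ders k [] e = e"
| "ders k (i # is) e = dr k i (ders k is e)"

lemma cont_xps: "continuous_on S (xprime_sq k)"
  unfolding xprime_sq_def by (intro continuous_intros)

lemma open_Omega: "open (Omega k)"
proof -
  have "Omega k = {x. xprime_sq k x < 1} \<inter> {x. 0 < x $ k} \<inter> {x. x $ k < 1 - xprime_sq k x}"
    unfolding Omega_def by auto
  moreover have "open {x::real^'a. xprime_sq k x < 1}"
    by (intro open_Collect_less cont_xps continuous_intros)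
  moreover have "open {x::real^'a. 0 < x $ k}"
    by (intro open_Collect_less continuous_intros)
  moreover have "open {x::real^'a. x $ k < 1 - xprime_sq k x}"
    by (intro open_Collect_less cont_xps continuous_intros)
  ultimately show ?thesis by auto
qed

lemma ev_line:
  fixes x :: "real^'n::finite"
  assumes "open S" "x \<in> S"
  shows "eventually (\<lambda>t. x + t *\<^sub>R axis i 1 \<in> S) (nhds (0::real))"
proof -
  have c: "isCont (\<lambda>t::real. x + t *\<^sub>R axis i 1) 0" by (auto intro!: continuous_intros)
  have "eventually (\<lambda>t. x + t *\<^sub>R axis i 1 \<in> S) (at (0::real))"
    using c assms unfolding isCont_def tendsto_def by auto
  then show ?thesis using assms by (simp add: eventually_nhds_conv_at)
qed

lemma pd_local:
  assumes "open S" "x \<in> S" "\<And>y. y \<in> S \<Longrightarrow> f y = g y"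
  shows "partial_deriv i f x = partial_deriv i g x"
  unfolding partial_deriv_def
  by (rule deriv_cong_ev[OF eventually_mono[OF ev_line[OF assms(1,2), of i]]]) (auto simp: assms(3))

lemma iter_ev:
  "x \<in> Omega k \<Longrightarrow> iter_partial is (ev k e) x = ev k (ders k is e) x"
proof (induction "is" arbitrary: x)
  case Nil then show ?case by simp
next
  case (Cons i "is")
  have "iter_partial (i # is) (ev k e) x = partial_deriv i (iter_partial is (ev k e)) x" by simp
  also have "\<dots> = partial_deriv i (ev k (ders k is e)) x"
    by (rule pd_local[OF open_Omega Cons.prems]) (simp add: Cons.IH)
  also have "\<dots> = ev k (dr k i (ders k is e)) x"
    unfolding partial_deriv_def using ev_deriv[OF Cons.prems] by (rule DERIV_imp_deriv)
  finally show ?case by simp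
qed

lemma cont_ev: "continuous_on (Omega k) (ev k e)"
proof (induction e)
  case (Pw c d)
  have "continuous_on (Omega k) (\<lambda>x. (x $ k) powr c * (1 - xprime_sq k x) powr d)"
    by (intro continuous_intros cont_xps) (auto simp: Omega_def)
  then show ?case by simp
qed (auto intro!: continuous_intros)

lemma smooth_ev: "smooth_on (Omega k) (ev k e)"
  unfolding smooth_on_def
proof (intro conjI allI ballI open_Omega)
  fix "is" :: "'a list"
  show "continuous_on (Omega k) (iter_partial is (ev k e))"
    using cont_ev[of k "ders k is e"] by (rule continuous_on_cong[THEN iffD1, rotated 2]) (auto simp: iter_ev)
next
  fix "is" :: "'a list" and i x assume x: "x \<in> Omega k"
  have "((\<lambda>t. iter_partial is (ev k e) (x + t *\<^sub>R axis i 1)) has_real_derivative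
      ev k (dr k i (ders k is e)) x) (at 0)"
    using ev_deriv[OF x, of "ders k is e" i]
    by (rule DERIV_cong_ev[THEN iffD1, rotated 3])
       (auto intro!: eventually_mono[OF ev_line[OF open_Omega x, of i]] simp: iter_ev)
  then show "(\<lambda>t. iter_partial is (ev k e) (x + t *\<^sub>R axis i 1)) differentiable (at 0)"
    using real_differentiable_def by blast
qed

lemma det_rowsparse:
  fixes A :: "real^'n::finite^'n"
  assumes ld: "\<And>i j. i \<noteq> k \<Longrightarrow> i \<noteq> j \<Longrightarrow> A$i$j = 0"
  shows "det A = prod (\<lambda>i. A$i$i) (UNIV::'n set)"
proof -
  let ?U = "UNIV:: 'n set"
  let ?PU = "{p. p permutes ?U}"
  let ?pp = "\<lambda>p. of_int (sign p) * prod (\<lambda>i. A$i$p i) (UNIV :: 'n set)"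
  have fU: "finite ?U" by simp
  from finite_permutations[OF fU] have fPU: "finite ?PU" .
  have id0: "{id} \<subseteq> ?PU"
    by (auto simp: permutes_id)
  have p0: "\<forall>p \<in> ?PU - {id}. ?pp p = (0::real)"
  proof
    fix p
    assume p: "p \<in> ?PU - {id}"
    then obtain j where j: "p j \<noteq> j"
      by fastforce
    have pinj: "inj p" using p permutes_inj by blast
    obtain i where i: "i \<noteq> k" "p i \<noteq> i"
    proof (cases "j = k")
      case True
      show ?thesis
      proof (rule that[of "p k"])
        show "p k \<noteq> k" using j True by simp
        show "p (p k) \<noteq> p k" using pinj j True by (metis injD)
      qed
    next
      case False then show ?thesis using j that by blast
    qed
    with ld have "\<exists>i \<in> ?U. A$i$p i = 0"
      by (metis UNIV_I)
    with prod_zero [OF fU] show "?pp p = 0"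
      by force
  qed
  from sum.mono_neutral_cong_left[OF fPU id0 p0] show ?thesis
    unfolding det_def by (simp add: sign_id)
qed

lemma det_colsparse:
  fixes A :: "real^'n::finite^'n"
  assumes ld: "\<And>i j. j \<noteq> k \<Longrightarrow> i \<noteq> j \<Longrightarrow> A$i$j = 0"
  shows "det A = prod (\<lambda>i. A$i$i) (UNIV::'n set)"
proof -
  have "det A = det (transpose A)" by (rule det_transpose[symmetric])
  also have "\<dots> = prod (\<lambda>i. transpose A$i$i) (UNIV::'n set)"
    by (rule det_rowsparse[of k]) (simp add: transpose_def ld)
  also have "\<dots> = prod (\<lambda>i. A$i$i) (UNIV::'n set)"
    by (simp add: transpose_def)
  finally show ?thesis .
qed

lemma det_elim:
  fixes M :: "real^'n::finite^'n"
  assumes kk: "M$k$k \<noteq> 0"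
    and off: "\<And>i j. i \<noteq> k \<Longrightarrow> j \<noteq> k \<Longrightarrow> i \<noteq> j \<Longrightarrow> M$i$j = M$i$k * M$k$j / M$k$k"
  shows "det M = M$k$k * (\<Prod>i\<in>UNIV-{k}. M$i$i - M$i$k * M$k$i / M$k$k)"
proof -
  define E :: "real^'n^'n" where "E = (\<chi> i j. if i = j then 1 else if j = k then -(M$i$k / M$k$k) else 0)"
  have "det E = (\<Prod>i\<in>UNIV. E $ i $ i)"
    by (rule det_colsparse[of k]) (auto simp: E_def)
  also have "\<dots> = 1" by (simp add: E_def)
  finally have dE: "det E = 1" .
  define N where "N = E ** M"
  have Nij: "N$i$j = M$i$j - (if i \<noteq> k then M$i$k / M$k$k * M$k$j else 0)" for i j
  proof -
    have "N$i$j = (\<Sum>l\<in>UNIV. E$i$l * M$l$j)" by (simp add: N_def matrix_matrix_mult_def)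
    also have "\<dots> = (\<Sum>l\<in>UNIV. (if l = i then M$i$j else 0) +
        (if l = k \<and> i \<noteq> k then -(M$i$k / M$k$k) * M$k$j else 0))"
      by (intro sum.cong refl) (simp add: E_def)
    also have "\<dots> = M$i$j - (if i \<noteq> k then M$i$k / M$k$k * M$k$j else 0)"
      unfolding sum.distrib by (simp add: if_distrib cong: if_cong)
    finally show ?thesis .
  qed
  have "det N = det M" by (simp add: N_def det_mul dE)
  moreover have "det N = (\<Prod>i\<in>UNIV. N$i$i)"
  proof (rule det_rowsparse[of k])
    fix i j :: 'n assume "i \<noteq> k" "i \<noteq> j"
    then show "N$i$j = 0" using kk off[of i j] by (cases "j = k") (auto simp: Nij)
  qed
  moreover have "(\<Prod>i\<in>UNIV. N$i$i) = N$k$k * (\<Prod>i\<in>UNIV-{k}. N$i$i)"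
    by (rule prod.remove) auto
  moreover have "(\<Prod>i\<in>UNIV-{k}. N$i$i) = (\<Prod>i\<in>UNIV-{k}. M$i$i - M$i$k * M$k$i / M$k$k)"
    by (intro prod.cong) (auto simp: Nij)
  ultimately show ?thesis by (simp add: Nij)
qed

definition W :: "'n::finite \<Rightarrow> real \<Rightarrow> real \<Rightarrow> 'n ex" where
  "W k a b = Ad (Crd k) (Mu (Cst (-1)) (Pw a b))"

lemma hess_ev:
  assumes "x \<in> Omega k"
  shows "hessian (ev k e) x $ i $ j = ev k (dr k i (dr k j e)) x"
  using iter_ev[OF assms, of "[i, j]" e] by (simp add: hessian_def)

lemma powr_pos_alg:
  fixes T :: real assumes "T > 0"
  shows "T powr c * T powr c / T powr d = T powr (2*c - d)"
proof -
  have "T powr (2*c - d) = T powr ((c + c) - d)" by (rule arg_cong[where f="\<lambda>z. T powr z"]) simp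
  also have "\<dots> = T powr (c + c) / T powr d" by (rule powr_diff)
  also have "\<dots> = T powr c * T powr c / T powr d" by (simp only: powr_add)
  finally show ?thesis by simp
qed

lemma det_hess:
  fixes x :: "real^'n::finite"
  assumes x: "x \<in> Omega k" and a: "0 < a" "a < 1" and ab: "a + b = 1"
  shows "det (hessian (ev k (W k a b)) x) =
     (a * b * (x$k) powr (a-2) * (1 - xprime_sq k x) powr b) *
     (2 * b * (x$k) powr a * (1 - xprime_sq k x) powr (b-1)) ^ (CARD('n) - 1)"
proof -
  define M where "M = hessian (ev k (W k a b)) x"
  define T where "T = x $ k"
  define Y where "Y = 1 - xprime_sq k x"
  have T: "T > 0" and Y: "Y > 0" using Omega_pos[OF x] by (auto simp: T_def Y_def)
  have b: "b = 1 - a" using ab by simp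
  have Mkk: "M$k$k = a * b * T powr (a-2) * Y powr b"
    unfolding M_def hess_ev[OF x] by (simp add: W_def T_def Y_def b algebra_simps)
  have Mik: "M$i$k = 2*a*b * x$i * T powr (a-1) * Y powr (b-1)" if "i \<noteq> k" for i
    unfolding M_def hess_ev[OF x] using that by (simp add: W_def T_def Y_def algebra_simps)
  have Mki: "M$k$i = 2*a*b * x$i * T powr (a-1) * Y powr (b-1)" if "i \<noteq> k" for i
    unfolding M_def hess_ev[OF x] using that by (simp add: W_def T_def Y_def algebra_simps)
  have Mij: "M$i$j = 2*b*(if i = j then 1 else 0) * T powr a * Y powr (b-1)
       + 2*b*(2-2*b) * x$i * x$j * T powr a * Y powr (b-2)" if "i \<noteq> k" "j \<noteq> k" for i j
    unfolding M_def hess_ev[OF x] using that by (auto simp: W_def T_def Y_def algebra_simps)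
  have nz: "M$k$k \<noteq> 0" using T Y a b by (simp add: Mkk)
  have key: "M$i$k * M$k$j / M$k$k = 2*b*(2-2*b) * x$i * x$j * T powr a * Y powr (b-2)"
    if "i \<noteq> k" "j \<noteq> k" for i j
  proof -
    have "M$i$k * M$k$j / M$k$k = (4*a*b * x$i * x$j) * (T powr (a-1) * T powr (a-1) / T powr (a-2))
         * (Y powr (b-1) * Y powr (b-1) / Y powr b)"
      using that a b T Y by (simp add: Mik Mki Mkk field_simps)
    also have "\<dots> = 2*b*(2-2*b) * x$i * x$j * T powr a * Y powr (b-2)"
    proof -
      have e1: "T powr (a-1) * T powr (a-1) / T powr (a-2) = T powr a"
        using powr_pos_alg[OF T, of "a-1" "a-2"] by (simp add: algebra_simps)
      have e2: "Y powr (b-1) * Y powr (b-1) / Y powr b = Y powr (b-2)"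
        using powr_pos_alg[OF Y, of "b-1" b] by (simp add: algebra_simps)
      have e3: "4*a*b = 2*b*(2-2*b)" using ab by (simp add: b algebra_simps)
      show ?thesis unfolding e1 e2 e3 by simp
    qed
    finally show ?thesis .
  qed
  have "det M = M$k$k * (\<Prod>i\<in>UNIV-{k}. M$i$i - M$i$k * M$k$i / M$k$k)"
  proof (rule det_elim[OF nz])
    fix i j assume "i \<noteq> k" "j \<noteq> k" "i \<noteq> j"
    then show "M$i$j = M$i$k * M$k$j / M$k$k" by (simp add: Mij key)
  qed
  also have "(\<Prod>i\<in>UNIV-{k}. M$i$i - M$i$k * M$k$i / M$k$k) =
      (\<Prod>i\<in>UNIV-{k}. 2 * b * T powr a * Y powr (b-1))"
    by (intro prod.cong refl) (simp add: Mij key)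
  also have "\<dots> = (2 * b * T powr a * Y powr (b-1)) ^ (CARD('n) - 1)"
    by (simp add: card_Diff_singleton)
  finally show ?thesis unfolding Mkk by (simp add: M_def T_def Y_def)
qed

lemma vec_sum_basis: "(\<Sum>b\<in>Basis. h b *\<^sub>R b :: real^'n::finite) $ j = h (axis j 1)"
proof -
  have "(\<Sum>b\<in>Basis. h b *\<^sub>R b :: real^'n::finite) $ j = (\<Sum>b\<in>Basis. h b *\<^sub>R b) \<bullet> axis j 1"
    by (simp add: cart_eq_inner_axis)
  also have "\<dots> = (\<Sum>b\<in>Basis. h b * (b \<bullet> axis j 1))"
    by (simp add: inner_sum_left)
  also have "\<dots> = h (axis j 1)"
    by (subst sum.mono_neutral_right[of Basis "{axis j 1}"]) (auto simp: inner_Basis axis_in_Basis_iff)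
  finally show ?thesis .
qed

lemma inner_int:
  fixes r Y :: real assumes r: "r > 0" and Y: "Y > 0"
  shows "(\<integral>\<^sup>+s. ennreal (s powr (r-1)) * indicator {0..Y} s \<partial>lborel) = ennreal (Y powr r / r)"
  using nn_integral_has_integral_lebesgue'[OF _ has_integral_powr_from_0[of "r-1" Y]] r Y by simp


lemma integ_main:
  fixes k :: "'n::finite" and r :: real
  assumes r: "r > 0"
  shows "integrable lborel (\<lambda>x::real^'n. indicator (Omega k) x * ((x$k) powr (r-1) * (1 - xprime_sq k x) powr (-r)))"
    (is "integrable lborel ?F")
proof -
  have cont: "continuous_on (Omega k) (\<lambda>x::real^'n. (x$k) powr (r-1) * (1 - xprime_sq k x) powr (-r))"
    by (intro continuous_intros cont_xps) (auto simp: Omega_def)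
  have Fm: "?F \<in> borel_measurable borel"
    using borel_measurable_continuous_on_indicator[OF borel_open[OF open_Omega] cont] by simp
  have Fnn: "0 \<le> ?F x" for x by simp
  define e :: "real^'n" where "e = axis k 1"
  define B' where "B' = (Basis :: (real^'n) set) - {e}"
  have eB: "e \<in> Basis" by (simp add: e_def axis_in_Basis_iff)
  have BB: "Basis = insert e B'" using eB by (auto simp: B'_def)
  have fB': "finite B'" "e \<notin> B'" by (auto simp: B'_def)
  interpret product_sigma_finite "\<lambda>_. lborel :: real measure" by standard
  have summ: "(\<lambda>f. \<Sum>b\<in>Basis. f b *\<^sub>R b :: real^'n) \<in> measurable (PiM Basis (\<lambda>_. lborel)) borel"
    by measurable
  have "(\<integral>\<^sup>+x. ennreal (?F x) \<partial>lborel) =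
      (\<integral>\<^sup>+f. ennreal (?F (\<Sum>b\<in>Basis. f b *\<^sub>R b)) \<partial>PiM Basis (\<lambda>_. lborel))"
    by (subst lborel_eq) (simp add: nn_integral_distr summ Fm)
  also have "\<dots> = (\<integral>\<^sup>+g. (\<integral>\<^sup>+s. ennreal (?F (\<Sum>b\<in>Basis. (g(e := s)) b *\<^sub>R b)) \<partial>lborel) \<partial>PiM B' (\<lambda>_. lborel))"
  proof -
    have Fm2: "(\<lambda>f. ennreal (?F (\<Sum>b\<in>Basis. f b *\<^sub>R b))) \<in> borel_measurable (PiM Basis (\<lambda>_. lborel))"
      using measurable_compose[OF summ Fm] by measurable
    show ?thesis
      unfolding BB using fB' Fm2 by (subst product_nn_integral_insert) (simp_all add: BB[symmetric])
  qed
  also have "\<dots> \<le> nn_integral (PiM B' (\<lambda>_. lborel)) (\<lambda>g. ennreal (1/r) * (\<Prod>b\<in>B'. indicator {-1..1::real} (g b)))"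
  proof (rule nn_integral_mono)
    fix g :: "real^'n \<Rightarrow> real"
    define q where "q = (\<Sum>j\<in>UNIV-{k}. (g (axis j 1))^2)"
    define V where "V = (\<lambda>s. (\<Sum>b\<in>Basis. (g(e := s)) b *\<^sub>R b) :: real^'n)"
    have V: "V s $ j = (if j = k then s else g (axis j 1))" for s j
      unfolding V_def vec_sum_basis by (auto simp: e_def axis_eq_axis)
    have xV: "xprime_sq k (V s) = q" for s
      unfolding xprime_sq_def q_def by (intro sum.cong) (auto simp: V)
    have FV: "?F (V s) = (if q < 1 \<and> 0 < s \<and> s < 1 - q then s powr (r-1) * (1-q) powr (-r) else 0)" for s
      by (auto simp: Omega_def xV V)
    show "(\<integral>\<^sup>+s. ennreal (?F (\<Sum>b\<in>Basis. (g(e := s)) b *\<^sub>R b)) \<partial>lborel)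
        \<le> ennreal (1/r) * (\<Prod>b\<in>B'. indicator {-1..1::real} (g b))"
    proof (cases "q < 1")
      case False
      have Vs: "(\<Sum>b\<in>Basis. (g(e := s)) b *\<^sub>R b) = V s" for s by (simp add: V_def)
      have z: "?F (V s) = 0" for s using FV[of s] False by simp
      have "(\<integral>\<^sup>+s. ennreal (?F (V s)) \<partial>lborel) = 0" by (simp only: z) simp
      then show ?thesis unfolding Vs by simp
    next
      case True
      have pr: "(\<Prod>b\<in>B'. indicator {-1..1::real} (g b)) = (1::ennreal)"
      proof (intro prod.neutral ballI)
        fix b assume "b \<in> B'"
        then obtain j where j: "j \<noteq> k" "b = axis j 1"
          by (auto simp: B'_def Basis_vec_def e_def) metis
        have "(g b)^2 \<le> q" unfolding q_def j
          by (rule member_le_sum) (use j in auto)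
        then have "\<bar>g b\<bar> \<le> 1" using True abs_square_le_1 by fastforce
        then show "indicator {-1..1::real} (g b) = (1::ennreal)" by (auto simp: indicator_def)
      qed
      have "(\<integral>\<^sup>+s. ennreal (?F (V s)) \<partial>lborel) \<le>
          (\<integral>\<^sup>+s. ennreal ((1-q) powr (-r)) * (ennreal (s powr (r-1)) * indicator {0..1-q} s) \<partial>lborel)"
        by (intro nn_integral_mono, unfold FV) (auto simp: indicator_def ennreal_mult[symmetric] mult.commute)
      also have "\<dots> = ennreal ((1-q) powr (-r)) * ennreal ((1-q) powr r / r)"
        using True r by (subst nn_integral_cmult) (auto simp: inner_int)
      also have "\<dots> = ennreal (1/r)"
        using True r by (simp add: ennreal_mult[symmetric] powr_minus field_simps)
      finally show ?thesis by (simp add: pr V_def)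
    qed
  qed
  also have "\<dots> = ennreal (1/r) * 2 ^ card B'"
  proof -
    have "nn_integral (PiM B' (\<lambda>_. lborel)) (\<lambda>g. (\<Prod>b\<in>B'. indicator {-1..1::real} (g b)))
        = (\<Prod>b\<in>B'. (\<integral>\<^sup>+y. indicator {-1..1::real} y \<partial>lborel))"
      using product_nn_integral_prod[OF fB'(1), where f="\<lambda>_. indicator {-1..1::real}"] by simp
    then show ?thesis by (subst nn_integral_cmult) auto
  qed
  also have "\<dots> < \<infinity>"
    by (simp add: ennreal_mult_less_top power_less_top_ennreal)
  finally have fin: "(\<integral>\<^sup>+x. ennreal (?F x) \<partial>lborel) < \<infinity>" .
  show ?thesis
    by (rule integrableI_nonneg) (use Fm fin in auto)
qed

lemma geo:
  fixes a b c1 c2 y1 y2 l m :: real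
  assumes a: "a \<ge> 0" "b \<ge> 0" "a + b = 1" and s: "c1 > 0" "c2 > 0" "y1 > 0" "y2 > 0"
    and l: "l \<ge> 0" "m \<ge> 0" "l + m = 1"
  shows "l * (c1 powr a * y1 powr b) + m * (c2 powr a * y2 powr b)
       \<le> (l * c1 + m * c2) powr a * (l * y1 + m * y2) powr b"
proof -
  define S where "S = l * c1 + m * c2"
  define Y where "Y = l * y1 + m * y2"
  have S: "S > 0" unfolding S_def using s l
    by (cases "l = 0") (auto intro: add_pos_nonneg add_nonneg_pos)
  have Y: "Y > 0" unfolding Y_def using s l
    by (cases "l = 0") (auto intro: add_pos_nonneg add_nonneg_pos)
  have i: "s powr a * y powr b \<le> S powr a * Y powr b * (a * (s/S) + b * (y/Y))" if "s > 0" "y > 0" for s y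
  proof -
    have "(s/S) powr a * (y/Y) powr b \<le> a * (s/S) + b * (y/Y)"
      by (rule Youngs_inequality_0) (use a that S Y in auto)
    then have "S powr a * Y powr b * ((s/S) powr a * (y/Y) powr b) \<le> S powr a * Y powr b * (a * (s/S) + b * (y/Y))"
      by (intro mult_left_mono) auto
    moreover have "S powr a * Y powr b * ((s/S) powr a * (y/Y) powr b) = s powr a * y powr b"
      using S Y by (simp add: powr_divide field_simps)
    ultimately show ?thesis by simp
  qed
  have "l * (c1 powr a * y1 powr b) + m * (c2 powr a * y2 powr b) \<le>
      l * (S powr a * Y powr b * (a * (c1/S) + b * (y1/Y))) + m * (S powr a * Y powr b * (a * (c2/S) + b * (y2/Y)))"
    by (intro add_mono mult_left_mono i) (use s l in auto)
  also have "\<dots> = S powr a * Y powr b * (a * ((l * c1 + m * c2)/S) + b * ((l * y1+m * y2)/Y))"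
    by (simp add: add_divide_distrib algebra_simps)
  also have "\<dots> = S powr a * Y powr b" using S Y a by (simp add: S_def[symmetric] Y_def[symmetric])
  finally show ?thesis by (simp add: S_def Y_def)
qed

lemma sq_convex:
  fixes u v l m :: real
  assumes "l \<ge> 0" "m \<ge> 0" "l + m = 1"
  shows "(l * u + m * v)^2 \<le> l * u^2 + m * v^2"
proof -
  have "l * u^2 + m * v^2 - (l * u + m * v)^2 = l * m * (u-v)^2"
  proof -
    have m: "m = 1 - l" using assms(3) by simp
    show ?thesis unfolding m by (simp add: power2_eq_square algebra_simps)
  qed
  moreover have "l * m * (u-v)^2 \<ge> 0" using assms by simp
  ultimately show ?thesis by linarith
qed

lemma xps_convex:
  assumes "l \<ge> 0" "m \<ge> 0" "l + m = 1"
  shows "xprime_sq k (l *\<^sub>R u + m *\<^sub>R v) \<le> l * xprime_sq k u + m * xprime_sq k v"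
  unfolding xprime_sq_def sum_distrib_left sum.distrib[symmetric]
  by (intro sum_mono) (simp add: sq_convex[OF assms])


lemma convex_Omega: "convex (Omega k)"
  unfolding convex_def
proof (intro ballI allI impI)
  fix u v :: "real^'a" and l m :: real
  assume u: "u \<in> Omega k" and v: "v \<in> Omega k" and lm: "0 \<le> l" "0 \<le> m" "l + m = 1"
  define z where "z = l *\<^sub>R u + m *\<^sub>R v"
  have xz: "xprime_sq k z \<le> l * xprime_sq k u + m * xprime_sq k v"
    unfolding z_def by (rule xps_convex[OF lm])
  have zk: "z $ k = l * u$k + m * v$k" by (simp add: z_def)
  from u v have uu: "0 < u$k" "u$k < 1 - xprime_sq k u" and vv: "0 < v$k" "v$k < 1 - xprime_sq k v"
    by (auto simp: Omega_def)
  have pos: "0 < z $ k" unfolding zk using lm uu vv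
    by (cases "l = 0") (auto intro: add_pos_nonneg add_nonneg_pos)
  have "l * u$k + m * v$k < l * (1 - xprime_sq k u) + m * (1 - xprime_sq k v)"
  proof (cases "l = 0")
    case True then show ?thesis using lm vv by simp
  next
    case False
    then have "l * u$k < l * (1 - xprime_sq k u)" using lm uu by simp
    moreover have "m * v$k \<le> m * (1 - xprime_sq k v)" using lm vv by (intro mult_left_mono) auto
    ultimately show ?thesis by linarith
  qed
  then have lt: "z $ k < 1 - xprime_sq k z" unfolding zk using xz lm by (simp add: algebra_simps)
  then show "l *\<^sub>R u + m *\<^sub>R v \<in> Omega k"
    using pos by (auto simp: Omega_def z_def[symmetric])
qed

lemma convex_w:
  assumes a: "0 < a" "0 < b" "a + b = 1"
  shows "convex_on (Omega k) (\<lambda>x. x$k - (x$k) powr a * (1 - xprime_sq k x) powr b)"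
  unfolding convex_on_def
proof (intro conjI convex_Omega ballI allI impI)
  fix u v :: "real^'a" and l m :: real
  assume u: "u \<in> Omega k" and v: "v \<in> Omega k" and lm: "0 \<le> l" "0 \<le> m" "l + m = 1"
  define z where "z = l *\<^sub>R u + m *\<^sub>R v"
  have xz: "xprime_sq k z \<le> l * xprime_sq k u + m * xprime_sq k v"
    unfolding z_def by (rule xps_convex[OF lm])
  have zk: "z $ k = l * u$k + m * v$k" by (simp add: z_def)
  from u v have uu: "0 < u$k" "0 < 1 - xprime_sq k u" and vv: "0 < v$k" "0 < 1 - xprime_sq k v"
    by (auto simp: Omega_def)
  have y: "l * (1 - xprime_sq k u) + m * (1 - xprime_sq k v) \<le> 1 - xprime_sq k z"
    using xz lm by (simp add: algebra_simps)
  have "l * ((u$k) powr a * (1 - xprime_sq k u) powr b) + m * ((v$k) powr a * (1 - xprime_sq k v) powr b)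
      \<le> (l * u$k + m * v$k) powr a * (l * (1 - xprime_sq k u) + m * (1 - xprime_sq k v)) powr b"
    by (rule geo) (use a uu vv lm in auto)
  also have "\<dots> \<le> (z$k) powr a * (1 - xprime_sq k z) powr b"
    unfolding zk using a lm uu vv y
    by (intro mult_left_mono powr_mono2) (auto intro: add_nonneg_nonneg)
  finally have h: "l * ((u$k) powr a * (1 - xprime_sq k u) powr b) + m * ((v$k) powr a * (1 - xprime_sq k v) powr b)
      \<le> (z$k) powr a * (1 - xprime_sq k z) powr b" .
  show "(l *\<^sub>R u + m *\<^sub>R v) $ k - ((l *\<^sub>R u + m *\<^sub>R v) $ k) powr a * (1 - xprime_sq k (l *\<^sub>R u + m *\<^sub>R v)) powr b
      \<le> l * (u$k - (u$k) powr a * (1 - xprime_sq k u) powr b) + m * (v$k - (v$k) powr a * (1 - xprime_sq k v) powr b)"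
    using h zk unfolding z_def[symmetric] by (simp add: algebra_simps)
qed


definition Cl :: "'n::finite \<Rightarrow> (real^'n) set" where
  "Cl k = {x. 0 \<le> x $ k \<and> x $ k \<le> 1 - xprime_sq k x}"

lemma closure_sub: "closure (Omega k) \<subseteq> Cl k"
proof (rule closure_minimal)
  show "Omega k \<subseteq> Cl k" by (auto simp: Omega_def Cl_def)
  have "closed {x::real^'a. 0 \<le> x $ k}" by (intro closed_Collect_le continuous_intros)
  moreover have "closed {x::real^'a. x $ k \<le> 1 - xprime_sq k x}"
    by (intro closed_Collect_le continuous_intros cont_xps)
  moreover have "Cl k = {x. 0 \<le> x $ k} \<inter> {x. x $ k \<le> 1 - xprime_sq k x}" by (auto simp: Cl_def)
  ultimately show "closed (Cl k)" by auto
qed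

lemma cont_w:
  assumes a: "0 < a" "0 < b"
  shows "continuous_on (closure (Omega k)) (\<lambda>x. x$k - (x$k) powr a * (1 - xprime_sq k x) powr b)"
proof (rule continuous_on_subset[OF _ closure_sub])
  show "continuous_on (Cl k) (\<lambda>x. x$k - (x$k) powr a * (1 - xprime_sq k x) powr b)"
    by (intro continuous_intros continuous_on_powr' cont_xps) (use a in \<open>auto simp: Cl_def\<close>)
qed

lemma frontier_w:
  assumes a: "0 < a" "0 < b" "a + b = 1" and x: "x \<in> frontier (Omega k)"
  shows "x$k - (x$k) powr a * (1 - xprime_sq k x) powr b = 0"
proof -
  have "x \<in> Cl k" "x \<notin> Omega k" using x closure_sub[of k] interior_open[OF open_Omega[of k]]
    by (auto simp: frontier_def)
  then have "x $ k = 0 \<or> x $ k = 1 - xprime_sq k x" by (auto simp: Cl_def Omega_def)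
  then show ?thesis
  proof
    assume "x $ k = 0" then show ?thesis using a by simp
  next
    assume e: "x $ k = 1 - xprime_sq k x"
    show ?thesis
    proof (cases "x $ k = 0")
      case True then show ?thesis using a by simp
    next
      case False
      have "(x$k) powr a * (x$k) powr b = x$k"
        using \<open>x \<in> Cl k\<close> False a by (simp add: powr_add[symmetric] Cl_def)
      then show ?thesis using e by simp
    qed
  qed
qed


lemma holder_w:
  fixes k :: "'n::finite"
  assumes a: "0 < a" "a < 1" and al: "a < \<alpha>"
  shows "\<not> holder_on \<alpha> (closure (Omega k)) (\<lambda>x::real^'n. x$k - (x$k) powr a * (1 - xprime_sq k x) powr b)"
proof
  define f where "f = (\<lambda>x::real^'n. x$k - (x$k) powr a * (1 - xprime_sq k x) powr b)"
  assume "holder_on \<alpha> (closure (Omega k)) (\<lambda>x::real^'n. x$k - (x$k) powr a * (1 - xprime_sq k x) powr b)"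
  then obtain C where C: "\<And>x y. x \<in> closure (Omega k) \<Longrightarrow> y \<in> closure (Omega k) \<Longrightarrow> \<bar>f x - f y\<bar> \<le> C * norm (x - y) powr \<alpha>"
    unfolding holder_on_def f_def by blast
  define P where "P = (\<lambda>t::real. t *\<^sub>R (axis k 1 :: real^'n))"
  have xP: "xprime_sq k (P t) = 0" for t
    unfolding xprime_sq_def P_def by (intro sum.neutral) (auto simp: axis_def)
  have PO: "P t \<in> Omega k" if "0 < t" "t < 1" for t
    using that by (simp add: Omega_def xP) (simp add: P_def)
  have Pk: "P t $ k = t" for t by (simp add: P_def)
  have fP: "f (P t) = t - t powr a" for t by (simp add: f_def Pk xP)
  have f0: "f 0 = 0" using a by (simp add: f_def)
  have z: "0 \<in> closure (Omega k)"
    unfolding closure_approachable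
  proof (intro allI impI)
    fix e :: real assume e: "e > 0"
    define t where "t = min (e/2) (1/2)"
    have t: "0 < t" "t < 1" "t < e" using e by (auto simp: t_def)
    show "\<exists>y\<in>Omega k. dist y 0 < e"
      by (rule bexI[of _ "P t"]) (use t PO in \<open>auto simp: P_def\<close>)
  qed
  have ineq: "t powr a - t \<le> C * t powr \<alpha>" if "0 < t" "t < 1" for t
  proof -
    have "\<bar>f (P t) - f 0\<bar> \<le> C * norm (P t - 0) powr \<alpha>"
      by (rule C) (use PO[OF that] z closure_subset in auto)
    then have "\<bar>t - t powr a\<bar> \<le> C * t powr \<alpha>" using that unfolding fP f0 by (simp add: P_def)
    then show ?thesis by linarith
  qed
  have lim1: "((\<lambda>t::real. t powr (1-a)) \<longlongrightarrow> 0) (at_right 0)"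
    by (rule tendsto_zero_powrI[OF tendsto_ident_at tendsto_const]) (use a in \<open>auto intro: eventually_mono[OF eventually_at_right_less]\<close>)
  have lim2: "((\<lambda>t::real. t powr (\<alpha>-a)) \<longlongrightarrow> 0) (at_right 0)"
    by (rule tendsto_zero_powrI[OF tendsto_ident_at tendsto_const]) (use al in \<open>auto intro: eventually_mono[OF eventually_at_right_less]\<close>)
  have "((\<lambda>t::real. 1 - t powr (1-a) - C * t powr (\<alpha>-a)) \<longlongrightarrow> 1 - 0 - C * 0) (at_right 0)"
    by (intro tendsto_intros lim1 lim2)
  then have ev1: "eventually (\<lambda>t::real. 0 < 1 - t powr (1-a) - C * t powr (\<alpha>-a)) (at_right 0)"
    by (rule order_tendstoD) simp
  have ev2: "eventually (\<lambda>t::real. t < 1) (at_right 0)"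
    by (rule order_tendstoD(2)[OF tendsto_ident_at]) simp
  have "eventually (\<lambda>t::real. 0 < 1 - t powr (1-a) - C * t powr (\<alpha>-a) \<and> t < 1 \<and> 0 < t) (at_right 0)"
    using ev1 ev2 eventually_at_right_less[of "0::real"] by eventually_elim auto
  then obtain t :: real where t: "0 < 1 - t powr (1-a) - C * t powr (\<alpha>-a)" "t < 1" "0 < t"
    using eventually_happens[of _ "at_right (0::real)"] by auto
  have "0 < t powr a * (1 - t powr (1-a) - C * t powr (\<alpha>-a))"
    using t by simp
  also have "\<dots> = t powr a - t - C * t powr \<alpha>"
    using t by (simp add: algebra_simps powr_add[symmetric])
  finally show False using ineq[OF t(3,2)] by simp
qed

theorem lemma3p1:
  fixes k :: "'n::finite" and p :: real
  assumes "CARD('n) \<ge> 2" and "0 < p" and "p < real CARD('n)"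
  shows "smooth_on (Omega k) (wfun k p)
       \<and> convex_on (Omega k) (wfun k p)
       \<and> continuous_on (closure (Omega k)) (wfun k p)
       \<and> (\<forall>x\<in>frontier (Omega k). wfun k p x = 0)
       \<and> (\<lambda>x. det (hessian (wfun k p) x)) absolutely_integrable_on (Omega k)
       \<and> (\<forall>\<alpha>. \<alpha> > 2 / (real CARD('n) + p) \<longrightarrow> \<not> holder_on \<alpha> (closure (Omega k)) (wfun k p))"
proof -
  define N where "N = real CARD('n)"
  define a where "a = 2 / (N + p)"
  define b where "b = (N + p - 2) / (N + p)"
  have N2: "N \<ge> 2" using assms(1) by (simp add: N_def)
  have pN: "p < N" using assms(3) by (simp add: N_def)
  have Np: "N + p > 2" using N2 assms(2) by simp
  have a0: "0 < a" using Np by (simp add: a_def)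
  have a1: "a < 1" using Np by (simp add: a_def)
  have b0: "0 < b" using Np by (simp add: b_def)
  have ab: "a + b = 1"
  proof -
    have "a + b = (2 + (N + p - 2)) / (N + p)" by (simp only: a_def b_def add_divide_distrib)
    also have "\<dots> = 1" using Np by simp
    finally show ?thesis .
  qed
  have wf: "wfun k p = (\<lambda>x. x$k - (x$k) powr a * (1 - xprime_sq k x) powr b)"
    by (simp add: wfun_def a_def b_def N_def fun_eq_iff)
  have we: "wfun k p = ev k (W k a b)" by (simp add: wf W_def fun_eq_iff)
  have S1: "smooth_on (Omega k) (wfun k p)" unfolding we by (rule smooth_ev)
  have S2: "convex_on (Omega k) (wfun k p)" unfolding wf by (rule convex_w[OF a0 b0 ab])
  have S3: "continuous_on (closure (Omega k)) (wfun k p)" unfolding wf by (rule cont_w[OF a0 b0])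
  have S4: "\<forall>x\<in>frontier (Omega k). wfun k p x = 0" unfolding wf using frontier_w[OF a0 b0 ab] by blast
  have S6: "\<forall>\<alpha>. \<alpha> > 2 / (real CARD('n) + p) \<longrightarrow> \<not> holder_on \<alpha> (closure (Omega k)) (wfun k p)"
    unfolding wf using holder_w[OF a0 a1, of _ k b] by (auto simp: a_def N_def)
  define r where "r = N * a - 1"
  have r0: "r > 0" using pN Np by (simp add: r_def a_def field_simps)
  define m where "m = CARD('n) - 1"
  have mN: "real m = N - 1" using assms(1) by (simp add: m_def N_def of_nat_diff)
  define K where "K = a * b * (2*b)^m"
  have dets: "det (hessian (wfun k p) x) = K * ((x$k) powr (r-1) * (1 - xprime_sq k x) powr (-r))"
    if x: "x \<in> Omega k" for x
  proof -
    define T where "T = x $ k"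
    define Y where "Y = 1 - xprime_sq k x"
    have T: "T > 0" and Y: "Y > 0" using Omega_pos[OF x] by (auto simp: T_def Y_def)
    have "det (hessian (wfun k p) x) = (a * b * T powr (a-2) * Y powr b) * (2 * b * T powr a * Y powr (b-1)) ^ m"
      unfolding we det_hess[OF x a0 a1 ab] by (simp add: T_def Y_def m_def)
    also have "\<dots> = K * ((T powr (a-2) * T powr (real m * a)) * (Y powr b * Y powr (real m * (b-1))))"
      using T Y by (simp add: K_def power_mult_distrib powr_power)
    also have "\<dots> = K * (T powr (r-1) * Y powr (-r))"
    proof -
      have ee1: "a - 2 + real m * a = r - 1" unfolding mN r_def by (simp add: algebra_simps)
      have ee2: "b + real m * (b-1) = -r"
      proof -
        have bm: "b - 1 = -a" using ab by simp
        have "b + real m * (b-1) = (a + b) - N * a" unfolding mN bm by (simp add: algebra_simps)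
        also have "\<dots> = -r" using ab by (simp add: r_def)
        finally show ?thesis .
      qed
      show ?thesis by (simp only: powr_add[symmetric] ee1 ee2)
    qed
    finally show ?thesis by (simp add: T_def Y_def)
  qed
  have I: "integrable lborel (\<lambda>x::real^'n. K * (indicator (Omega k) x * ((x$k) powr (r-1) * (1 - xprime_sq k x) powr (-r))))"
    by (rule integrable_mult_right[OF integ_main[OF r0]])
  have eq: "(\<lambda>x. indicator (Omega k) x *\<^sub>R det (hessian (wfun k p) x)) =
      (\<lambda>x::real^'n. K * (indicator (Omega k) x * ((x$k) powr (r-1) * (1 - xprime_sq k x) powr (-r))))"
    by (auto simp: fun_eq_iff indicator_def dets)
  have S5: "(\<lambda>x. det (hessian (wfun k p) x)) absolutely_integrable_on (Omega k)"
    unfolding set_integrable_def eq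
    using I integrable_completion[OF borel_measurable_integrable[OF I]] by simp
  show ?thesis using S1 S2 S3 S4 S5 S6 by blast
qed

end
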